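(* Let $1=i_1<i_2<\dots<i_m=2T+1$ be odd layers. Measure every qubit of $|\mathrm{ATG}\rangle$ in the $|\pm\rangle$ basis except the code vertices $q_{l,i_j}$ ($l\in[n]$, $j\in[m]$). Then each of the following operators on the unmeasured qubits, multiplied by a suitable product $X(\alpha)$ of Pauli $X$'s on measured qubits, is a stabilizer of $|\mathrm{ATG}\rangle$: (1) every $X$-check and every $Z$-check of $Q$ applied on layer $i_j$, for each $j\in[m]$; (2) $\bigotimes_{j=1}^m\bar X_{(i_j)}$ for each logical $X$ operator, and $\bar Z_{(i_j)}\otimes\bar Z_{(i_{j+1})}$ for each logical $Z$ operator and each $j\in[m-1]$. Consequently, for every measurement outcome $s$, the post-measurement state of the unmeasured qubits is an eigenstate of each of these operators with eigenvalue $(-1)^{s\cdot\alpha}$, and hence equals the encoded state $|\overline{\mathrm{GHZ}_m^{\otimes k}}\rangle$ up to a Pauli correction.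
   Context: A CSS code $Q=(H^X,H^Z)$ is given by full-rank matrices $H^X\in\mathbb F_2^{m_x\times n}$, $H^Z\in\mathbb F_2^{m_z\times n}$ with $H^X(H^Z)^T=0$, with $k=n-m_x-m_z$ logical qubits. Write $i\sim c$ if qubit $i$ is in the support of check $c$. For a logical $X$ (resp. $Z$) operator of $Q$ with support $\alpha_x$ (resp. $\alpha_z$), $\bar X_{(t)}=\prod_{i\in\alpha_x}X_{q_{i,t}}$ and $\bar Z_{(t)}=\prod_{i\in\alpha_z}Z_{q_{i,t}}$. The Alternating Tanner Graph (ATG): fix $T\ge1$. Graph $G=(V,E)$ with code vertices $q_{i,t}$ ($i\in[n]$, $t\in[2T+1]$); Z-check vertices $z_{c,t}$ ($c\in[m_z]$, $t$ odd in $[2T+1]$); X-check vertices $x_{c,t}$ ($c\in[m_x]$, $t$ even in $[2T]$). Edges: $q_{i,t}q_{i,t+1}$ for $t\in[2T]$; $q_{i,t}z_{c,t}$ for odd $t$ whenever $H^Z_{c,i}=1$; $q_{i,t}x_{c,t}$ for even $t$ whenever $H^X_{c,i}=1$. $|\mathrm{ATG}\rangle=\prod_{(u,v)\in E}CZ_{u,v}|+\rangle^{\otimes V}$, with stabilizer generators $G_u=X_u\prod_{v:(u,v)\in E}Z_v$. $|\mathrm{GHZ}_m\rangle=\frac1{\sqrt2}(|0\rangle^{\otimes m}+|1\rangle^{\otimes m})$. $|\overline{\mathrm{GHZ}_m^{\otimes k}}\rangle$ denotes the state of $m$ code blocks of $Q$ (layers $i_1,\dots,i_m$) in which, for each $j\in[k]$,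 the $j$-th logical qubits of the $m$ blocks form a GHZ state; it is stabilized by the checks of $Q$ on each block, by $\bigotimes_{a}\bar X_{j,(i_a)}$ and by $\bar Z_{j,(i_a)}\otimes\bar Z_{j,(i_{a+1})}$. *)

theory Defs
  imports Complex_Main
begin

section \<open>CSS codes over F_2 (check matrices as Boolean functions, rows c, columns i)\<close>

definition f2_full_row_rank :: "(nat \<Rightarrow> nat \<Rightarrow> bool) \<Rightarrow> nat \<Rightarrow> nat \<Rightarrow> bool" where
  "f2_full_row_rank H m n \<longleftrightarrow>
     (\<forall>S \<subseteq> {..<m}. S \<noteq> {} \<longrightarrow> (\<exists>i<n. odd (card {c\<in>S. H c i})))"

definition css_orthogonal ::
  "(nat \<Rightarrow> nat \<Rightarrow> bool) \<Rightarrow> (nat \<Rightarrow> nat \<Rightarrow> bool) \<Rightarrow> nat \<Rightarrow> nat \<Rightarrow> nat \<Rightarrow> bool" where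
  "css_orthogonal HX HZ mx mz n \<longleftrightarrow>
     (\<forall>c<mx. \<forall>c'<mz. even (card {i\<in>{..<n}. HX c i \<and> HZ c' i}))"

definition css_code ::
  "(nat \<Rightarrow> nat \<Rightarrow> bool) \<Rightarrow> (nat \<Rightarrow> nat \<Rightarrow> bool) \<Rightarrow> nat \<Rightarrow> nat \<Rightarrow> nat \<Rightarrow> bool" where
  "css_code HX HZ mx mz n \<longleftrightarrow>
     f2_full_row_rank HX mx n \<and> f2_full_row_rank HZ mz n \<and> css_orthogonal HX HZ mx mz n"

definition f2_rowspace :: "(nat \<Rightarrow> nat \<Rightarrow> bool) \<Rightarrow> nat \<Rightarrow> nat \<Rightarrow> nat set set" where
  "f2_rowspace H m n = {{i. i < n \<and> odd (card {c\<in>S. H c i})} | S. S \<subseteq> {..<m}}"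

definition logical_X_support ::
  "(nat \<Rightarrow> nat \<Rightarrow> bool) \<Rightarrow> (nat \<Rightarrow> nat \<Rightarrow> bool) \<Rightarrow> nat \<Rightarrow> nat \<Rightarrow> nat \<Rightarrow> nat set \<Rightarrow> bool" where
  "logical_X_support HX HZ mx mz n \<alpha> \<longleftrightarrow>
     \<alpha> \<subseteq> {..<n} \<and> (\<forall>c<mz. even (card {i\<in>\<alpha>. HZ c i})) \<and> \<alpha> \<notin> f2_rowspace HX mx n"

definition logical_Z_support ::
  "(nat \<Rightarrow> nat \<Rightarrow> bool) \<Rightarrow> (nat \<Rightarrow> nat \<Rightarrow> bool) \<Rightarrow> nat \<Rightarrow> nat \<Rightarrow> nat \<Rightarrow> nat set \<Rightarrow> bool" where
  "logical_Z_support HX HZ mx mz n \<alpha> \<longleftrightarrow>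
     \<alpha> \<subseteq> {..<n} \<and> (\<forall>c<mx. even (card {i\<in>\<alpha>. HX c i})) \<and> \<alpha> \<notin> f2_rowspace HZ mz n"

text \<open>A state on qubits of type 'v is a function from computational basis states
  (identified with the set of qubits in state 1) to complex amplitudes.\<close>
type_synonym 'v state = "'v set \<Rightarrow> complex"

definition symdiff :: "'v set \<Rightarrow> 'v set \<Rightarrow> 'v set" where
  "symdiff A B = (A - B) \<union> (B - A)"

text \<open>The Pauli operator X(a) Z(b) (X on qubits in a, Z on qubits in b; b finite):
  X(a)Z(b) |y> = (-1)^{|b \<inter> y|} |y xor a>.\<close>
definition pauli :: "'v set \<Rightarrow> 'v set \<Rightarrow> 'v state \<Rightarrow> 'v state" where
  "pauli a b \<psi> = (\<lambda>S. (-1) ^ card (b \<inter> symdiff S a) * \<psi> (symdiff S a))"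

text \<open>Graph state prod_{e\<in>E} CZ_e |+>^{\<otimes>V}; E is a set of 2-element subsets of V.\<close>
definition graph_state :: "'v set \<Rightarrow> 'v set set \<Rightarrow> 'v state" where
  "graph_state V E = (\<lambda>S. if S \<subseteq> V
      then (-1) ^ card {e\<in>E. e \<subseteq> S} / complex_of_real (sqrt (2 ^ card V)) else 0)"

text \<open>Unnormalised post-measurement state on the unmeasured qubits V - M after measuring
  each qubit of M in the |+>,|-> basis with outcome s \<subseteq> M (v \<in> s means outcome |->),
  i.e. (<s|_M \<otimes> I) \<psi>.\<close>
definition post_meas :: "'v set \<Rightarrow> 'v set \<Rightarrow> 'v state \<Rightarrow> 'v set \<Rightarrow> 'v state" where
  "post_meas V M \<psi> s = (\<lambda>Y. if Y \<subseteq> V - M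
      then (\<Sum>Z\<in>Pow M. (-1) ^ card (s \<inter> Z) / complex_of_real (sqrt (2 ^ card M)) * \<psi> (Y \<union> Z))
      else 0)"

datatype vtx = Qv nat nat | Zv nat nat | Xv nat nat
  (* Qv i t = q_{i,t};  Zv c t = z_{c,t};  Xv c t = x_{c,t}; layers t are 1-based *)

definition atg_V :: "nat \<Rightarrow> nat \<Rightarrow> nat \<Rightarrow> nat \<Rightarrow> vtx set" where
  "atg_V n mx mz T =
     {Qv i t | i t. i < n \<and> 1 \<le> t \<and> t \<le> 2*T+1}
   \<union> {Zv c t | c t. c < mz \<and> odd t \<and> 1 \<le> t \<and> t \<le> 2*T+1}
   \<union> {Xv c t | c t. c < mx \<and> even t \<and> 1 \<le> t \<and> t \<le> 2*T}"

definition atg_E ::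
  "(nat \<Rightarrow> nat \<Rightarrow> bool) \<Rightarrow> (nat \<Rightarrow> nat \<Rightarrow> bool) \<Rightarrow> nat \<Rightarrow> nat \<Rightarrow> nat \<Rightarrow> nat \<Rightarrow> vtx set set" where
  "atg_E HX HZ n mx mz T =
     {{Qv i t, Qv i (t+1)} | i t. i < n \<and> 1 \<le> t \<and> t \<le> 2*T}
   \<union> {{Qv i t, Zv c t} | i c t. i < n \<and> c < mz \<and> odd t \<and> 1 \<le> t \<and> t \<le> 2*T+1 \<and> HZ c i}
   \<union> {{Qv i t, Xv c t} | i c t. i < n \<and> c < mx \<and> even t \<and> 1 \<le> t \<and> t \<le> 2*T \<and> HX c i}"

definition atg_state ::
  "(nat \<Rightarrow> nat \<Rightarrow> bool) \<Rightarrow> (nat \<Rightarrow> nat \<Rightarrow> bool) \<Rightarrow> nat \<Rightarrow> nat \<Rightarrow> nat \<Rightarrow> nat \<Rightarrow> vtx state" where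
  "atg_state HX HZ n mx mz T = graph_state (atg_V n mx mz T) (atg_E HX HZ n mx mz T)"

text \<open>Unmeasured qubits: code vertices q_{l,i_j}, l \<in> [n], j \<in> [m]
  (the layers i_1,...,i_m are given by lay 1, ..., lay m).\<close>
definition unmeasured :: "nat \<Rightarrow> nat \<Rightarrow> (nat \<Rightarrow> nat) \<Rightarrow> vtx set" where
  "unmeasured n m lay = {Qv l (lay j) | l j. l < n \<and> 1 \<le> j \<and> j \<le> m}"

text \<open>The operators (as pairs (a,b) meaning X(a)Z(b)) on the unmeasured qubits listed in
  items (1) and (2): X- and Z-checks on each layer i_j; the product over all layers of a
  logical X; and logical Z on two consecutive layers i_j, i_{j+1}.\<close>
definition ghz_ops ::
  "(nat \<Rightarrow> nat \<Rightarrow> bool) \<Rightarrow> (nat \<Rightarrow> nat \<Rightarrow> bool) \<Rightarrow> nat \<Rightarrow> nat \<Rightarrow> nat \<Rightarrow> nat \<Rightarrow> (nat \<Rightarrow> nat)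
     \<Rightarrow> (vtx set \<times> vtx set) set" where
  "ghz_ops HX HZ n mx mz m lay =
     {({Qv i (lay j) | i. i < n \<and> HX c i}, {}) | c j. c < mx \<and> 1 \<le> j \<and> j \<le> m}
   \<union> {({}, {Qv i (lay j) | i. i < n \<and> HZ c i}) | c j. c < mz \<and> 1 \<le> j \<and> j \<le> m}
   \<union> {({Qv i (lay j) | i j. i \<in> \<alpha> \<and> 1 \<le> j \<and> j \<le> m}, {}) | \<alpha>.
         logical_X_support HX HZ mx mz n \<alpha>}
   \<union> {({}, {Qv i (lay j) | i. i \<in> \<alpha>} \<union> {Qv i (lay (j+1)) | i. i \<in> \<alpha>}) | \<alpha> j.
         logical_Z_support HX HZ mx mz n \<alpha> \<and> 1 \<le> j \<and> j < m}"

text \<open>A state of the m code blocks (layers i_1..i_m) is the encoded state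
  |GHZ_m^{\<otimes>k}> (up to normalisation) iff it is stabilised by all these operators.\<close>
definition is_encoded_ghz ::
  "(nat \<Rightarrow> nat \<Rightarrow> bool) \<Rightarrow> (nat \<Rightarrow> nat \<Rightarrow> bool) \<Rightarrow> nat \<Rightarrow> nat \<Rightarrow> nat \<Rightarrow> nat \<Rightarrow> (nat \<Rightarrow> nat)
     \<Rightarrow> vtx state \<Rightarrow> bool" where
  "is_encoded_ghz HX HZ n mx mz m lay \<phi> \<longleftrightarrow>
     (\<forall>(a, b) \<in> ghz_ops HX HZ n mx mz m lay. pauli a b \<phi> = \<phi>)"

end

theory Submission
  imports Defs
begin


lemma mem_symdiff[simp]: "x \<in> symdiff A B \<longleftrightarrow> (x \<in> A) \<noteq> (x \<in> B)"
  by (auto simp: symdiff_def)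

lemma neg1_eq: "even (x + y) \<Longrightarrow> (-1::'a::ring_1) ^ x = (-1) ^ y"
  by (cases "even x") (auto simp: minus_one_power_iff)

lemma card_symdiff_parity:
  assumes "finite X" "finite Y"
  shows "even (card (symdiff X Y) + card X + card Y)"
proof -
  have 1: "card X = card (X - Y) + card (X \<inter> Y)"
    using assms by (metis Diff_Diff_Int Diff_disjoint Diff_partition Diff_subset card_Un_disjoint
        finite_Diff inf_commute inf_le1 Int_Diff_disjoint Un_Diff_Int finite_Int)
  have 2: "card Y = card (Y - X) + card (X \<inter> Y)"
    using assms by (metis Int_Diff_disjoint Un_Diff_Int card_Un_disjoint finite_Diff finite_Int inf_commute)
  have 3: "card (symdiff X Y) = card (X - Y) + card (Y - X)"
    unfolding symdiff_def using assms by (intro card_Un_disjoint) auto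
  show ?thesis using 1 2 3 by presburger
qed

lemma delta2:
  assumes "finite S" "finite A"
  shows "(\<Sum>w\<in>S. \<Sum>v\<in>A. if w = u \<and> v = u' then 1 else (0::nat)) = (if u\<in>S \<and> u'\<in>A then 1 else 0)"
proof -
  have "(\<Sum>v\<in>A. if w = u \<and> v = u' then 1 else (0::nat)) = (if w = u then (if u'\<in>A then 1 else 0) else 0)" for w
    using assms by (cases "w = u") auto
  then have "(\<Sum>w\<in>S. \<Sum>v\<in>A. if w = u \<and> v = u' then 1 else (0::nat)) = (\<Sum>w\<in>S. if w = u then (if u'\<in>A then 1 else 0) else 0)"
    by simp
  also have "\<dots> = (if u\<in>S \<and> u'\<in>A then 1 else 0)" using assms by simp
  finally show ?thesis .
qed

lemma graph_stab:
  fixes V :: "'v set" and E :: "'v set set"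
  assumes finV: "finite V"
    and Ewf: "\<forall>e\<in>E. \<exists>u v. u \<noteq> v \<and> e = {u,v}"
    and finE: "finite E"
    and AV: "A \<subseteq> V" and BV: "B \<subseteq> V"
    and indep: "\<forall>u\<in>A. \<forall>v\<in>A. {u,v} \<notin> E"
    and Bdef: "\<forall>w\<in>V. w \<in> B \<longleftrightarrow> odd (card {v\<in>A. {w,v} \<in> E})"
  shows "pauli A B (graph_state V E) = graph_state V E"
proof
  fix S
  define deg where "deg w = card {v\<in>A. {w,v} \<in> E}" for w
  have finA: "finite A" using AV finV finite_subset by blast
  have finB: "finite B" using BV finV finite_subset by blast
  show "pauli A B (graph_state V E) S = graph_state V E S"
  proof (cases "S \<subseteq> V")
    case False
    then have "\<not> symdiff S A \<subseteq> V" using AV by (metis mem_symdiff subset_iff)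
    then show ?thesis using False by (simp add: pauli_def graph_state_def)
  next
    case True
    have finS: "finite S" using True finV finite_subset by blast
    have SAV: "symdiff S A \<subseteq> V" using True AV by auto
    have cnt: "card {e\<in>E. P e} = (\<Sum>e\<in>E. if P e then 1 else 0)" for P
      unfolding card_eq_sum by (rule sum.inter_filter[OF finE])
    have degsum: "deg w = (\<Sum>v\<in>A. \<Sum>e\<in>E. if e = {w,v} then 1 else 0)" for w
    proof -
      have "deg w = (\<Sum>v\<in>A. if {w,v} \<in> E then 1 else 0)"
        unfolding deg_def card_eq_sum by (rule sum.inter_filter[OF finA])
      also have "\<dots> = (\<Sum>v\<in>A. \<Sum>e\<in>E. if e = {w,v} then 1 else 0)"
        using finE by (intro sum.cong) auto
      finally show ?thesis .
    qed
    have "(\<Sum>w\<in>S. deg w) = (\<Sum>w\<in>S. \<Sum>v\<in>A. \<Sum>e\<in>E. if e = {w,v} then 1 else 0)"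
      by (simp add: degsum)
    also have "\<dots> = (\<Sum>w\<in>S. \<Sum>e\<in>E. \<Sum>v\<in>A. if e = {w,v} then 1 else 0)"
      by (rule sum.cong[OF refl], rule sum.swap)
    also have "\<dots> = (\<Sum>e\<in>E. \<Sum>w\<in>S. \<Sum>v\<in>A. if e = {w,v} then 1 else 0)"
      by (rule sum.swap)
    finally have dsum: "(\<Sum>w\<in>S. deg w) = (\<Sum>e\<in>E. \<Sum>w\<in>S. \<Sum>v\<in>A. if e = {w,v} then 1 else 0)" .
    have peredge: "even ((if e \<subseteq> symdiff S A then 1 else 0) + (if e \<subseteq> S then 1 else 0)
        + (\<Sum>w\<in>S. \<Sum>v\<in>A. if e = {w,v} then 1 else (0::nat)))" if "e \<in> E" for e
    proof -
      obtain u u' where uu: "u \<noteq> u'" "e = {u,u'}" using Ewf \<open>e\<in>E\<close> by blast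
      have nA: "\<not> (u \<in> A \<and> u' \<in> A)" using indep \<open>e\<in>E\<close> uu by auto
      have ind: "(if e = {w,v} then 1 else (0::nat)) =
           (if w = u \<and> v = u' then 1 else 0) + (if w = u' \<and> v = u then 1 else 0)" for w v
      proof -
        have eq: "({u,u'} = {w,v}) = ((w=u \<and> v=u') \<or> (w=u' \<and> v=u))"
          by (simp add: doubleton_eq_iff) blast
        show ?thesis unfolding uu(2) eq using uu(1) by auto
      qed
      have cr: "(\<Sum>w\<in>S. \<Sum>v\<in>A. if e = {w,v} then 1 else (0::nat)) =
          (if u \<in> S \<and> u' \<in> A then 1 else 0) + (if u' \<in> S \<and> u \<in> A then 1 else 0)"
        unfolding ind using finS finA by (simp only: sum.distrib delta2)
      show ?thesis unfolding cr using uu nA by auto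
    qed
    have key: "even (card {e\<in>E. e \<subseteq> symdiff S A} + card {e\<in>E. e \<subseteq> S} + (\<Sum>w\<in>S. deg w))"
    proof -
      have "card {e\<in>E. e \<subseteq> symdiff S A} + card {e\<in>E. e \<subseteq> S} + (\<Sum>w\<in>S. deg w)
        = (\<Sum>e\<in>E. (if e \<subseteq> symdiff S A then 1 else 0) + (if e \<subseteq> S then 1 else 0)
        + (\<Sum>w\<in>S. \<Sum>v\<in>A. if e = {w,v} then 1 else (0::nat)))"
        unfolding cnt dsum by (simp add: sum.distrib)
      also have "even \<dots>" by (rule dvd_sum) (use peredge in blast)
      finally show ?thesis .
    qed
    have BS: "B \<inter> S = {w\<in>S. odd (deg w)}" using Bdef True BV unfolding deg_def by auto
    have p2: "even (card (B \<inter> S) + (\<Sum>w\<in>S. deg w))"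
      using even_sum_iff[OF finS, of deg] BS by simp
    have BA: "B \<inter> A = {}"
    proof -
      { fix u assume "u \<in> B" "u \<in> A"
        then have "{v\<in>A. {u,v} \<in> E} = {}" using indep by auto
        moreover have "u \<in> V" using BV \<open>u\<in>B\<close> by auto
        ultimately have False using Bdef \<open>u\<in>B\<close> by (metis card.empty even_zero) }
      then show ?thesis by blast
    qed
    have "B \<inter> symdiff S A = symdiff (B \<inter> S) (B \<inter> A)" by auto
    then have p3: "even (card (B \<inter> symdiff S A) + card (B \<inter> S))"
      using card_symdiff_parity[of "B \<inter> S" "B \<inter> A"] finB BA by simp
    have "even (card (B \<inter> symdiff S A) + card {e\<in>E. e \<subseteq> symdiff S A} + card {e\<in>E. e \<subseteq> S})"
      using key p2 p3 by presburger
    then have "(-1::complex) ^ (card (B \<inter> symdiff S A) + card {e\<in>E. e \<subseteq> symdiff S A})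
        = (-1) ^ card {e\<in>E. e \<subseteq> S}"
      by (rule neg1_eq)
    then have "(-1::complex) ^ card (B \<inter> symdiff S A) * (-1) ^ card {e\<in>E. e \<subseteq> symdiff S A}
        = (-1) ^ card {e\<in>E. e \<subseteq> S}"
      by (simp only: power_add)
    then show ?thesis using True SAV by (simp add: pauli_def graph_state_def)
  qed
qed



lemma sum_invol:
  assumes "\<And>x. x \<in> A \<Longrightarrow> f x \<in> A" "\<And>x. x \<in> A \<Longrightarrow> f (f x) = x"
  shows "sum g A = sum (\<lambda>x. g (f x)) A"
  by (rule sum.reindex_bij_witness[where i = f and j = f]) (use assms in auto)

lemma symdiff_invol[simp]: "symdiff (symdiff Z a) a = Z"
  by (auto simp: symdiff_def)

lemma symdiff_empty[simp]: "symdiff S {} = S"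
  by (auto simp: symdiff_def)

lemma symdiff_comm3: "symdiff (symdiff S a) b = symdiff (symdiff S b) a"
  by (auto simp: symdiff_def)

lemma sgn_symdiff:
  assumes "finite B"
  shows "(-1::complex) ^ card (B \<inter> symdiff X Y) = (-1) ^ card (B \<inter> X) * (-1) ^ card (B \<inter> Y)"
proof -
  have "B \<inter> symdiff X Y = symdiff (B \<inter> X) (B \<inter> Y)" by auto
  then have "even (card (B \<inter> symdiff X Y) + (card (B \<inter> X) + card (B \<inter> Y)))"
    using card_symdiff_parity[of "B \<inter> X" "B \<inter> Y"] assms by (simp add: add.assoc)
  then have "(-1::complex) ^ card (B \<inter> symdiff X Y) = (-1) ^ (card (B \<inter> X) + card (B \<inter> Y))"
    by (rule neg1_eq)
  then show ?thesis by (simp only: power_add)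
qed

lemma neg1_sq[simp]: "(-1::complex) ^ k * (-1) ^ k = 1"
  by (simp add: power_add[symmetric] mult_2[symmetric])

lemma post_meas_eig:
  fixes V M :: "'v set" and \<psi> :: "'v state"
  assumes finV: "finite V" and MV: "M \<subseteq> V"
    and aU: "a \<subseteq> V - M" and bU: "b \<subseteq> V - M" and alM: "\<alpha> \<subseteq> M" and sM: "s \<subseteq> M"
    and stab: "pauli (a \<union> \<alpha>) b \<psi> = \<psi>"
  shows "pauli a b (post_meas V M \<psi> s) = (\<lambda>Y. (-1) ^ card (s \<inter> \<alpha>) * post_meas V M \<psi> s Y)"
proof
  fix Y
  have finM: "finite M" using finite_subset[OF MV finV] .
  have finb: "finite b" using finite_subset[OF bU] finV by blast
  have fins: "finite s" using finite_subset[OF sM finM] .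
  define r where "r = complex_of_real (sqrt (2 ^ card M))"
  define c where "c Z = (-1::complex) ^ card (s \<inter> Z) / r" for Z
  show "pauli a b (post_meas V M \<psi> s) Y = (-1) ^ card (s \<inter> \<alpha>) * post_meas V M \<psi> s Y"
  proof (cases "Y \<subseteq> V - M")
    case False
    have "\<not> symdiff Y a \<subseteq> V - M"
    proof
      assume h: "symdiff Y a \<subseteq> V - M"
      from False obtain x where x: "x \<in> Y" "x \<notin> V - M" by blast
      with aU have "x \<notin> a" by blast
      with x have "x \<in> symdiff Y a" by simp
      with h x show False by blast
    qed
    then show ?thesis using False by (simp add: pauli_def post_meas_def)
  next
    case True
    define Y' where "Y' = symdiff Y a"
    have Y'U: "Y' \<subseteq> V - M" using True aU unfolding Y'_def by auto
    have psi_rel: "\<psi> (Y' \<union> symdiff Z \<alpha>) = (-1) ^ card (b \<inter> Y') * \<psi> (Y \<union> Z)" if "Z \<subseteq> M" for Z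
    proof -
      have e1: "symdiff (Y \<union> Z) (a \<union> \<alpha>) = Y' \<union> symdiff Z \<alpha>"
        using True aU alM that unfolding Y'_def by (auto simp: symdiff_def)
      have e2: "b \<inter> (Y' \<union> symdiff Z \<alpha>) = b \<inter> Y'"
        using bU alM that by (auto simp: symdiff_def)
      have "\<psi> (Y \<union> Z) = (-1) ^ card (b \<inter> Y') * \<psi> (Y' \<union> symdiff Z \<alpha>)"
        using fun_cong[OF stab, of "Y \<union> Z"] unfolding pauli_def e1 e2 by simp
      then have "(-1) ^ card (b \<inter> Y') * \<psi> (Y \<union> Z) = ((-1) ^ card (b \<inter> Y') * (-1) ^ card (b \<inter> Y')) * \<psi> (Y' \<union> symdiff Z \<alpha>)"
        by (simp only: mult.assoc)
      then show ?thesis by simp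
    qed
    have c_rel: "c (symdiff Z \<alpha>) = (-1) ^ card (s \<inter> \<alpha>) * c Z" for Z
      unfolding c_def using sgn_symdiff[OF fins, of Z \<alpha>] by simp
    have "(\<Sum>Z\<in>Pow M. c Z * \<psi> (Y' \<union> Z)) = (\<Sum>Z\<in>Pow M. c (symdiff Z \<alpha>) * \<psi> (Y' \<union> symdiff Z \<alpha>))"
      by (rule sum_invol[where f="\<lambda>Z. symdiff Z \<alpha>"]) (use alM in auto)
    also have "\<dots> = (\<Sum>Z\<in>Pow M. (-1) ^ card (s \<inter> \<alpha>) * (-1) ^ card (b \<inter> Y') * (c Z * \<psi> (Y \<union> Z)))"
      by (rule sum.cong[OF refl]) (simp add: c_rel psi_rel)
    also have "\<dots> = (-1) ^ card (s \<inter> \<alpha>) * (-1) ^ card (b \<inter> Y') * (\<Sum>Z\<in>Pow M. c Z * \<psi> (Y \<union> Z))"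
      by (simp add: sum_distrib_left)
    finally have S: "(\<Sum>Z\<in>Pow M. c Z * \<psi> (Y' \<union> Z)) = (-1) ^ card (s \<inter> \<alpha>) * (-1) ^ card (b \<inter> Y') * (\<Sum>Z\<in>Pow M. c Z * \<psi> (Y \<union> Z))" .
    have "pauli a b (post_meas V M \<psi> s) Y = (-1) ^ card (b \<inter> Y') * (\<Sum>Z\<in>Pow M. c Z * \<psi> (Y' \<union> Z))"
      using Y'U unfolding pauli_def post_meas_def Y'_def c_def r_def by simp
    also have "\<dots> = (-1) ^ card (s \<inter> \<alpha>) * (\<Sum>Z\<in>Pow M. c Z * \<psi> (Y \<union> Z))"
    proof -
      have "(-1::complex) ^ card (b \<inter> Y') * ((-1) ^ card (s \<inter> \<alpha>) * (-1) ^ card (b \<inter> Y') * (\<Sum>Z\<in>Pow M. c Z * \<psi> (Y \<union> Z)))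
        = ((-1) ^ card (b \<inter> Y') * (-1) ^ card (b \<inter> Y')) * ((-1) ^ card (s \<inter> \<alpha>) * (\<Sum>Z\<in>Pow M. c Z * \<psi> (Y \<union> Z)))"
        by (simp only: mult_ac)
      then show ?thesis unfolding S by simp
    qed
    also have "\<dots> = (-1) ^ card (s \<inter> \<alpha>) * post_meas V M \<psi> s Y"
      using True unfolding post_meas_def c_def r_def by simp
    finally show ?thesis .
  qed
qed

lemma char_orth:
  assumes finU: "finite U" and DU: "D \<subseteq> U" and Dne: "D \<noteq> {}"
  shows "(\<Sum>W\<in>Pow U. (-1::complex) ^ card (W \<inter> D)) = 0"
proof -
  obtain d where d: "d \<in> D" using Dne by blast
  have finD: "finite D" using finU DU finite_subset by blast
  let ?S = "\<Sum>W\<in>Pow U. (-1::complex) ^ card (W \<inter> D)"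
  have "?S = (\<Sum>W\<in>Pow U. (-1::complex) ^ card (symdiff W {d} \<inter> D))"
    by (rule sum_invol[where f="\<lambda>W. symdiff W {d}"]) (use d DU in auto)
  also have "\<dots> = (\<Sum>W\<in>Pow U. - ((-1::complex) ^ card (W \<inter> D)))"
  proof (rule sum.cong[OF refl])
    fix W
    have "(-1::complex) ^ card (symdiff W {d} \<inter> D) = (-1) ^ card (D \<inter> symdiff W {d})"
      by (simp add: Int_commute)
    also have "\<dots> = (-1) ^ card (D \<inter> W) * (-1) ^ card (D \<inter> {d})" by (rule sgn_symdiff[OF finD])
    also have "\<dots> = - ((-1) ^ card (W \<inter> D))" using d by (simp add: Int_commute)
    finally show "(-1::complex) ^ card (symdiff W {d} \<inter> D) = - ((-1) ^ card (W \<inter> D))" .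
  qed
  also have "\<dots> = - ?S" by (simp add: sum_negf)
  finally show ?thesis by simp
qed

lemma char_sum:
  assumes finU: "finite U" and DU: "D \<subseteq> U"
  shows "(\<Sum>W\<in>Pow U. (-1::complex) ^ card (W \<inter> D)) = (if D = {} then 2 ^ card U else 0)"
  using char_orth[OF assms] finU by (simp add: card_Pow)

lemma fourier_nonzero:
  fixes \<phi> :: "'v state"
  assumes finU: "finite U" and Y0: "Y0 \<subseteq> U" "\<phi> Y0 \<noteq> 0"
  shows "\<exists>W\<subseteq>U. (\<Sum>Y\<in>Pow U. (-1) ^ card (W \<inter> Y) * \<phi> Y) \<noteq> 0"
proof (rule ccontr)
  assume "\<not> ?thesis"
  then have z: "\<And>W. W \<subseteq> U \<Longrightarrow> (\<Sum>Y\<in>Pow U. (-1) ^ card (W \<inter> Y) * \<phi> Y) = 0" by blast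
  have "0 = (\<Sum>W\<in>Pow U. (-1::complex) ^ card (W \<inter> Y0) * (\<Sum>Y\<in>Pow U. (-1) ^ card (W \<inter> Y) * \<phi> Y))"
    using z by simp
  also have "\<dots> = (\<Sum>W\<in>Pow U. \<Sum>Y\<in>Pow U. (-1::complex) ^ card (W \<inter> symdiff Y0 Y) * \<phi> Y)"
  proof (rule sum.cong[OF refl])
    fix W assume "W \<in> Pow U"
    then have fW: "finite W" using finU finite_subset by blast
    show "(-1::complex) ^ card (W \<inter> Y0) * (\<Sum>Y\<in>Pow U. (-1) ^ card (W \<inter> Y) * \<phi> Y)
       = (\<Sum>Y\<in>Pow U. (-1::complex) ^ card (W \<inter> symdiff Y0 Y) * \<phi> Y)"
      by (simp add: sum_distrib_left sgn_symdiff[OF fW] mult.assoc)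
  qed
  also have "\<dots> = (\<Sum>Y\<in>Pow U. \<Sum>W\<in>Pow U. (-1::complex) ^ card (W \<inter> symdiff Y0 Y) * \<phi> Y)"
    by (rule sum.swap)
  also have "\<dots> = (\<Sum>Y\<in>Pow U. (\<Sum>W\<in>Pow U. (-1::complex) ^ card (W \<inter> symdiff Y0 Y)) * \<phi> Y)"
    by (simp only: sum_distrib_right)
  also have "\<dots> = (\<Sum>Y\<in>Pow U. (if Y = Y0 then 2 ^ card U else 0) * \<phi> Y)"
  proof (rule sum.cong[OF refl])
    fix Y assume "Y \<in> Pow U"
    then have "symdiff Y0 Y \<subseteq> U" using Y0 by (auto simp: symdiff_def)
    moreover have "symdiff Y0 Y = {} \<longleftrightarrow> Y = Y0" by (auto simp: symdiff_def)
    ultimately show "(\<Sum>W\<in>Pow U. (-1::complex) ^ card (W \<inter> symdiff Y0 Y)) * \<phi> Y = (if Y = Y0 then 2 ^ card U else 0) * \<phi> Y"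
      using char_sum[OF finU] by simp
  qed
  also have "\<dots> = (\<Sum>Y\<in>Pow U. if Y = Y0 then 2 ^ card U * \<phi> Y0 else 0)"
    by (rule sum.cong[OF refl]) simp
  also have "\<dots> = 2 ^ card U * \<phi> Y0" using finU Y0 by simp
  finally have "2 ^ card U * \<phi> Y0 = 0" by (rule sym)
  then show False using Y0(2) by simp
qed



lemma pauli_app: "pauli a b \<phi> S = (-1) ^ card (b \<inter> symdiff S a) * \<phi> (symdiff S a)"
  by (simp add: pauli_def)

lemma correction:
  fixes \<phi> :: "'v state" and U :: "'v set" and Ops :: "('v set \<times> 'v set) set"
  assumes finU: "finite U" and supp: "\<forall>Y. \<not> Y \<subseteq> U \<longrightarrow> \<phi> Y = 0"
    and ops: "\<forall>(a',b')\<in>Ops. a' \<subseteq> U \<and> b' \<subseteq> U \<and> (a' = {} \<or> b' = {}) \<and> (\<exists>c. pauli a' b' \<phi> = (\<lambda>Y. c * \<phi> Y))"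
  shows "\<exists>a b. a \<subseteq> U \<and> b \<subseteq> U \<and> (\<forall>(a',b')\<in>Ops. pauli a' b' (pauli a b \<phi>) = pauli a b \<phi>)"
proof (cases "\<forall>Y. \<phi> Y = 0")
  case True
  then have z: "\<phi> = (\<lambda>_. 0)" by auto
  show ?thesis by (rule exI[of _ "{}"], rule exI[of _ "{}"]) (simp add: z pauli_def)
next
  case False
  then obtain Y0 where Y0: "\<phi> Y0 \<noteq> 0" by blast
  with supp have Y0U: "Y0 \<subseteq> U" by blast
  obtain W0 where W0U: "W0 \<subseteq> U" and F0: "(\<Sum>Y\<in>Pow U. (-1) ^ card (W0 \<inter> Y) * \<phi> Y) \<noteq> 0"
    using fourier_nonzero[of U Y0 \<phi>] finU Y0U Y0 by blast
  define F where "F = (\<Sum>Y\<in>Pow U. (-1) ^ card (W0 \<inter> Y) * \<phi> Y)"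
  have finW0: "finite W0" using finite_subset[OF W0U finU] .
  have "\<forall>(a',b')\<in>Ops. pauli a' b' (pauli Y0 W0 \<phi>) = pauli Y0 W0 \<phi>"
  proof (intro ballI, clarify)
    fix a' b' assume ab: "(a', b') \<in> Ops"
    from ops ab have a'U: "a' \<subseteq> U" and b'U: "b' \<subseteq> U" and cs: "a' = {} \<or> b' = {}"
      and "\<exists>c. pauli a' b' \<phi> = (\<lambda>Y. c * \<phi> Y)" by auto
    then obtain c where c: "pauli a' b' \<phi> = (\<lambda>Y. c * \<phi> Y)" by blast
    show "pauli a' b' (pauli Y0 W0 \<phi>) = pauli Y0 W0 \<phi>"
    proof (cases "b' = {}")
      case True
      have eig: "\<phi> (symdiff Y a') = c * \<phi> Y" for Y
        using fun_cong[OF c, of Y] True by (simp add: pauli_def)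
      have "F = (\<Sum>Y\<in>Pow U. (-1) ^ card (W0 \<inter> symdiff Y a') * \<phi> (symdiff Y a'))"
        unfolding F_def by (rule sum_invol[where f="\<lambda>Y. symdiff Y a'"]) (use a'U in auto)
      also have "\<dots> = (\<Sum>Y\<in>Pow U. ((-1) ^ card (W0 \<inter> a') * c) * ((-1) ^ card (W0 \<inter> Y) * \<phi> Y))"
        by (rule sum.cong[OF refl]) (simp add: eig sgn_symdiff[OF finW0] mult_ac)
      also have "\<dots> = ((-1) ^ card (W0 \<inter> a') * c) * F"
        unfolding F_def by (simp only: sum_distrib_left)
      finally have "((-1) ^ card (W0 \<inter> a') * c) * F = 1 * F" by simp
      then have k: "(-1) ^ card (W0 \<inter> a') * c = 1" using F0 unfolding F_def by (rule mult_right_cancel[THEN iffD1, rotated])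
      show ?thesis
      proof
        fix S
        have "pauli a' b' (pauli Y0 W0 \<phi>) S = pauli Y0 W0 \<phi> (symdiff S a')"
          using True by (simp add: pauli_def)
        also have "\<dots> = (-1) ^ card (W0 \<inter> symdiff (symdiff S Y0) a') * \<phi> (symdiff (symdiff S Y0) a')"
          by (simp add: pauli_app symdiff_comm3)
        also have "\<dots> = ((-1) ^ card (W0 \<inter> a') * c) * ((-1) ^ card (W0 \<inter> symdiff S Y0) * \<phi> (symdiff S Y0))"
          by (simp add: eig sgn_symdiff[OF finW0, of "symdiff S Y0" a'] mult_ac)
        also have "\<dots> = pauli Y0 W0 \<phi> S" by (simp add: k pauli_app)
        finally show "pauli a' b' (pauli Y0 W0 \<phi>) S = pauli Y0 W0 \<phi> S" .
      qed
    next
      case False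
      with cs have a'0: "a' = {}" by blast
      have finb: "finite b'" using finite_subset[OF b'U finU] .
      have eig: "(-1) ^ card (b' \<inter> Y) * \<phi> Y = c * \<phi> Y" for Y
        using fun_cong[OF c, of Y] a'0 by (simp add: pauli_def)
      have k: "(-1) ^ card (b' \<inter> Y0) = c"
        using eig[of Y0] Y0 by simp
      show ?thesis
      proof
        fix S
        define X where "X = symdiff S Y0"
        have SX: "S = symdiff X Y0" unfolding X_def by simp
        have "pauli a' b' (pauli Y0 W0 \<phi>) S = (-1) ^ card (b' \<inter> S) * ((-1) ^ card (W0 \<inter> X) * \<phi> X)"
          using a'0 by (simp add: pauli_app X_def)
        also have "\<dots> = (-1) ^ card (b' \<inter> Y0) * (-1) ^ card (W0 \<inter> X) * ((-1) ^ card (b' \<inter> X) * \<phi> X)"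
          unfolding SX by (simp add: sgn_symdiff[OF finb, of X Y0] mult_ac)
        also have "\<dots> = ((-1) ^ card (b' \<inter> Y0) * (-1) ^ card (b' \<inter> Y0)) * ((-1) ^ card (W0 \<inter> X) * \<phi> X)"
          by (simp only: eig[of X] k[symmetric]) (simp only: mult_ac)
        also have "\<dots> = pauli Y0 W0 \<phi> S" by (simp add: pauli_app X_def)
        finally show "pauli a' b' (pauli Y0 W0 \<phi>) S = pauli Y0 W0 \<phi> S" .
      qed
    qed
  qed
  then show ?thesis using Y0U W0U by blast
qed



fun adj :: "(nat \<Rightarrow> nat \<Rightarrow> bool) \<Rightarrow> (nat \<Rightarrow> nat \<Rightarrow> bool) \<Rightarrow> nat \<Rightarrow> nat \<Rightarrow> nat \<Rightarrow> nat \<Rightarrow> vtx \<Rightarrow> vtx \<Rightarrow> bool" where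
  "adj HX HZ n mx mz T (Qv i s) (Qv i' s') = (i = i' \<and> i < n \<and> ((s' = s+1 \<and> 1 \<le> s \<and> s \<le> 2*T) \<or> (s = s'+1 \<and> 1 \<le> s' \<and> s' \<le> 2*T)))"
| "adj HX HZ n mx mz T (Qv i s) (Zv c s') = (s = s' \<and> i < n \<and> c < mz \<and> odd s \<and> 1 \<le> s \<and> s \<le> 2*T+1 \<and> HZ c i)"
| "adj HX HZ n mx mz T (Zv c s') (Qv i s) = (s = s' \<and> i < n \<and> c < mz \<and> odd s \<and> 1 \<le> s \<and> s \<le> 2*T+1 \<and> HZ c i)"
| "adj HX HZ n mx mz T (Qv i s) (Xv c s') = (s = s' \<and> i < n \<and> c < mx \<and> even s \<and> 1 \<le> s \<and> s \<le> 2*T \<and> HX c i)"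
| "adj HX HZ n mx mz T (Xv c s') (Qv i s) = (s = s' \<and> i < n \<and> c < mx \<and> even s \<and> 1 \<le> s \<and> s \<le> 2*T \<and> HX c i)"
| "adj HX HZ n mx mz T (Zv c s) (Zv c' s') = False"
| "adj HX HZ n mx mz T (Zv c s) (Xv c' s') = False"
| "adj HX HZ n mx mz T (Xv c s) (Zv c' s') = False"
| "adj HX HZ n mx mz T (Xv c s) (Xv c' s') = False"

lemma edge_iff: "{w, v} \<in> atg_E HX HZ n mx mz T \<longleftrightarrow> adj HX HZ n mx mz T w v"
proof
  assume "{w, v} \<in> atg_E HX HZ n mx mz T"
  then show "adj HX HZ n mx mz T w v"
    unfolding atg_E_def by (auto simp: doubleton_eq_iff)
next
  assume h: "adj HX HZ n mx mz T w v"
  show "{w, v} \<in> atg_E HX HZ n mx mz T"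
  proof (cases w; cases v)
    fix i s i' s' assume "w = Qv i s" "v = Qv i' s'"
    with h show ?thesis unfolding atg_E_def
      by (auto simp: doubleton_eq_iff insert_commute)
  qed (use h in \<open>auto simp: atg_E_def doubleton_eq_iff insert_commute\<close>)
qed

lemma atg_Ewf: "\<forall>e\<in>atg_E HX HZ n mx mz T. \<exists>u v. u \<noteq> v \<and> e = {u,v}"
  unfolding atg_E_def by (auto; (rule exI, rule exI, rule conjI[OF _ refl]); simp)

lemma atg_V_finite: "finite (atg_V n mx mz T)"
proof -
  have "atg_V n mx mz T \<subseteq> (\<lambda>(i,t). Qv i t) ` ({..<n} \<times> {..2*T+1}) \<union> (\<lambda>(i,t). Zv i t) ` ({..<mz} \<times> {..2*T+1})
      \<union> (\<lambda>(i,t). Xv i t) ` ({..<mx} \<times> {..2*T+1})"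
    unfolding atg_V_def by auto
  then show ?thesis by (rule finite_subset) auto
qed

lemma atg_E_sub: "atg_E HX HZ n mx mz T \<subseteq> Pow (atg_V n mx mz T)"
  unfolding atg_E_def atg_V_def by auto

lemma atg_E_finite: "finite (atg_E HX HZ n mx mz T)"
  using finite_subset[OF atg_E_sub] atg_V_finite by blast

lemma atg_stab:
  assumes AV: "A \<subseteq> atg_V n mx mz T" and BV: "B \<subseteq> atg_V n mx mz T"
    and indep: "\<forall>u\<in>A. \<forall>v\<in>A. \<not> adj HX HZ n mx mz T u v"
    and Bdef: "\<forall>w\<in>atg_V n mx mz T. w \<in> B \<longleftrightarrow> odd (card {v\<in>A. adj HX HZ n mx mz T w v})"
  shows "pauli A B (atg_state HX HZ n mx mz T) = atg_state HX HZ n mx mz T"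
  unfolding atg_state_def
  by (rule graph_stab[OF atg_V_finite atg_Ewf atg_E_finite AV BV]) (use indep Bdef in \<open>auto simp: edge_iff\<close>)



lemma inj_Qv: "inj_on (\<lambda>i. Qv i t) X" by (auto simp: inj_on_def)

lemma stab_Z:
  assumes c: "c < mz" and t: "odd t" "1 \<le> t" "t \<le> 2*T+1"
  shows "pauli {Zv c t} {Qv i t | i. i < n \<and> HZ c i} (atg_state HX HZ n mx mz T) = atg_state HX HZ n mx mz T"
proof (rule atg_stab)
  show "{Zv c t} \<subseteq> atg_V n mx mz T" using assms unfolding atg_V_def by auto
  show "{Qv i t | i. i < n \<and> HZ c i} \<subseteq> atg_V n mx mz T" using assms unfolding atg_V_def by auto
  show "\<forall>u\<in>{Zv c t}. \<forall>v\<in>{Zv c t}. \<not> adj HX HZ n mx mz T u v" by simp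
  show "\<forall>w\<in>atg_V n mx mz T. w \<in> {Qv i t | i. i < n \<and> HZ c i} \<longleftrightarrow> odd (card {v\<in>{Zv c t}. adj HX HZ n mx mz T w v})"
  proof
    fix w assume "w \<in> atg_V n mx mz T"
    have eq: "{v\<in>{Zv c t}. adj HX HZ n mx mz T w v} = (if adj HX HZ n mx mz T w (Zv c t) then {Zv c t} else {})"
      by auto
    show "w \<in> {Qv i t | i. i < n \<and> HZ c i} \<longleftrightarrow> odd (card {v\<in>{Zv c t}. adj HX HZ n mx mz T w v})"
      unfolding eq using assms by (cases w) auto
  qed
qed

lemma stab_X:
  assumes c: "c < mx" and t: "odd t" "1 \<le> t" "t \<le> 2*T+1"
    and orth: "css_orthogonal HX HZ mx mz n"
  shows "pauli ({Qv i t | i. i < n \<and> HX c i} \<union> {Xv c s | s. (s+1 = t \<or> s = t+1) \<and> 1 \<le> s \<and> s \<le> 2*T}) {}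
     (atg_state HX HZ n mx mz T) = atg_state HX HZ n mx mz T"
proof (rule atg_stab)
  let ?A = "{Qv i t | i. i < n \<and> HX c i} \<union> {Xv c s | s. (s+1 = t \<or> s = t+1) \<and> 1 \<le> s \<and> s \<le> 2*T}"
  let ?adj = "adj HX HZ n mx mz T"
  show "?A \<subseteq> atg_V n mx mz T" using assms unfolding atg_V_def by auto
  show "{} \<subseteq> atg_V n mx mz T" by simp
  show "\<forall>u\<in>?A. \<forall>v\<in>?A. \<not> ?adj u v" using t by auto
  show "\<forall>w\<in>atg_V n mx mz T. w \<in> {} \<longleftrightarrow> odd (card {v\<in>?A. ?adj w v})"
  proof
    fix w assume wV: "w \<in> atg_V n mx mz T"
    show "w \<in> {} \<longleftrightarrow> odd (card {v\<in>?A. ?adj w v})"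
    proof (cases w)
      case (Qv i' s)
      with wV have i's: "i' < n" "1 \<le> s" "s \<le> 2*T+1" unfolding atg_V_def by auto
      show ?thesis
      proof (cases "HX c i' \<and> (s = t+1 \<or> s+1 = t)")
        case True
        then have "even s" using t by auto
        then have "s \<le> 2*T" using i's by presburger
        then have "{v\<in>?A. ?adj w v} = {Qv i' t, Xv c s}"
          using True Qv i's assms \<open>even s\<close> by auto
        then show ?thesis by (simp only:) simp
      next
        case False
        then have "{v\<in>?A. ?adj w v} = {}"
          using Qv i's assms by auto
        then show ?thesis by (simp only:) simp
      qed
    next
      case (Zv c' s)
      with wV have cs: "c' < mz" "odd s" "1 \<le> s" "s \<le> 2*T+1" unfolding atg_V_def by auto
      show ?thesis
      proof (cases "s = t")
        case True
        then have "{v\<in>?A. ?adj w v} = (\<lambda>i. Qv i t) ` {i\<in>{..<n}. HX c i \<and> HZ c' i}"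
          using Zv cs assms by auto
        moreover have "even (card {i\<in>{..<n}. HX c i \<and> HZ c' i})"
          using orth c cs unfolding css_orthogonal_def by blast
        ultimately show ?thesis by (simp add: card_image[OF inj_Qv])
      next
        case False
        then have "{v\<in>?A. ?adj w v} = {}" using Zv by auto
        then show ?thesis by (simp only:) simp
      qed
    next
      case (Xv c' s)
      with wV have cs: "even s" unfolding atg_V_def by auto
      then have "{v\<in>?A. ?adj w v} = {}" using Xv t by auto
      then show ?thesis by (simp only:) simp
    qed
  qed
qed



lemma stab_LX:
  assumes aL: "\<alpha> \<subseteq> {..<n}" and cz: "\<forall>c<mz. even (card {i\<in>\<alpha>. HZ c i})"
  shows "pauli {Qv i s | i s. i \<in> \<alpha> \<and> odd s \<and> 1 \<le> s \<and> s \<le> 2*T+1} {}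
     (atg_state HX HZ n mx mz T) = atg_state HX HZ n mx mz T"
proof (rule atg_stab)
  let ?A = "{Qv i s | i s. i \<in> \<alpha> \<and> odd s \<and> 1 \<le> s \<and> s \<le> 2*T+1}"
  let ?adj = "adj HX HZ n mx mz T"
  show "?A \<subseteq> atg_V n mx mz T" using aL unfolding atg_V_def by auto
  show "{} \<subseteq> atg_V n mx mz T" by simp
  show "\<forall>u\<in>?A. \<forall>v\<in>?A. \<not> ?adj u v" by auto
  show "\<forall>w\<in>atg_V n mx mz T. w \<in> {} \<longleftrightarrow> odd (card {v\<in>?A. ?adj w v})"
  proof
    fix w assume wV: "w \<in> atg_V n mx mz T"
    show "w \<in> {} \<longleftrightarrow> odd (card {v\<in>?A. ?adj w v})"
    proof (cases w)
      case (Qv i' s)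
      with wV have i's: "i' < n" "1 \<le> s" "s \<le> 2*T+1" unfolding atg_V_def by auto
      show ?thesis
      proof (cases "i' \<in> \<alpha> \<and> even s")
        case True
        from True obtain h where h: "s = 2*h" by (auto elim!: evenE)
        have s2a: "2 \<le> s" using h i's by simp
        have s2b: "s \<le> 2*T" using h i's by simp
        note s2 = s2a s2b
        then obtain k where k: "s = Suc k" by (cases s) auto
        have "{v\<in>?A. ?adj w v} = {Qv i' k, Qv i' (Suc s)}"
        proof
          show "{v\<in>?A. ?adj w v} \<subseteq> {Qv i' k, Qv i' (Suc s)}" using Qv k by auto
          show "{Qv i' k, Qv i' (Suc s)} \<subseteq> {v\<in>?A. ?adj w v}" using Qv k True i's s2 by auto
        qed
        then show ?thesis using k by (simp only:) simp
      next
        case False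
        then have "{v\<in>?A. ?adj w v} = {}"
          using Qv i's by auto
        then show ?thesis by (simp only:) simp
      qed
    next
      case (Zv c s)
      with wV have cs: "c < mz" "odd s" "1 \<le> s" "s \<le> 2*T+1" unfolding atg_V_def by auto
      have "{v\<in>?A. ?adj w v} = (\<lambda>i. Qv i s) ` {i\<in>\<alpha>. HZ c i}"
        using Zv cs aL by auto
      moreover have "even (card {i\<in>\<alpha>. HZ c i})" using cz cs by blast
      ultimately show ?thesis by (simp add: card_image[OF inj_Qv])
    next
      case (Xv c s)
      with wV have cs: "even s" unfolding atg_V_def by auto
      then have "{v\<in>?A. ?adj w v} = {}" using Xv by auto
      then show ?thesis by (simp only:) simp
    qed
  qed
qed

lemma stab_LZ:
  assumes aL: "\<alpha> \<subseteq> {..<n}" and cx: "\<forall>c<mx. even (card {i\<in>\<alpha>. HX c i})"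
    and t: "odd t" "odd t'" "1 \<le> t" "t < t'" "t' \<le> 2*T+1"
  shows "pauli {Qv i s | i s. i \<in> \<alpha> \<and> even s \<and> t < s \<and> s < t'} ({Qv i t | i. i \<in> \<alpha>} \<union> {Qv i t' | i. i \<in> \<alpha>})
     (atg_state HX HZ n mx mz T) = atg_state HX HZ n mx mz T"
proof (rule atg_stab)
  let ?A = "{Qv i s | i s. i \<in> \<alpha> \<and> even s \<and> t < s \<and> s < t'}"
  let ?B = "{Qv i t | i. i \<in> \<alpha>} \<union> {Qv i t' | i. i \<in> \<alpha>}"
  let ?adj = "adj HX HZ n mx mz T"
  show "?A \<subseteq> atg_V n mx mz T" using aL t unfolding atg_V_def by auto
  show "?B \<subseteq> atg_V n mx mz T" using aL t unfolding atg_V_def by auto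
  show "\<forall>u\<in>?A. \<forall>v\<in>?A. \<not> ?adj u v" by auto
  show "\<forall>w\<in>atg_V n mx mz T. w \<in> ?B \<longleftrightarrow> odd (card {v\<in>?A. ?adj w v})"
  proof
    fix w assume wV: "w \<in> atg_V n mx mz T"
    show "w \<in> ?B \<longleftrightarrow> odd (card {v\<in>?A. ?adj w v})"
    proof (cases w)
      case (Qv i' s)
      with wV have i's: "i' < n" "1 \<le> s" "s \<le> 2*T+1" unfolding atg_V_def by auto
      show ?thesis
      proof (cases "i' \<in> \<alpha> \<and> odd s")
        case True
        define P where "P = (t < s + 1 \<and> s + 1 < t')"
        define Q where "Q = (t + 1 < s \<and> s < t' + 1)"
        obtain k where k: "s = Suc k" using i's by (cases s) auto
        have eq: "{v\<in>?A. ?adj w v} = (if P then {Qv i' (Suc s)} else {}) \<union> (if Q then {Qv i' k} else {})"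
        proof
          show "{v\<in>?A. ?adj w v} \<subseteq> (if P then {Qv i' (Suc s)} else {}) \<union> (if Q then {Qv i' k} else {})"
            using Qv k True unfolding P_def Q_def by auto
          show "(if P then {Qv i' (Suc s)} else {}) \<union> (if Q then {Qv i' k} else {}) \<subseteq> {v\<in>?A. ?adj w v}"
            using Qv k True i's t unfolding P_def Q_def by auto
        qed
        have c: "card {v\<in>?A. ?adj w v} = (if P then 1 else 0) + (if Q then 1 else 0)"
          unfolding eq using k by auto
        have "w \<in> ?B \<longleftrightarrow> (s = t \<or> s = t')" using Qv True by auto
        moreover have "(s = t \<or> s = t') \<longleftrightarrow> odd ((if P then 1 else 0) + (if Q then 1 else 0::nat))"
        proof -
          obtain a where a: "t = 2*a+1" using t(1) by (auto elim!: oddE)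
          obtain b where b: "t' = 2*b+1" using t(2) by (auto elim!: oddE)
          obtain d where d: "s = 2*d+1" using True by (auto elim!: oddE)
          show ?thesis unfolding P_def Q_def a b d using t(4) unfolding a b by (auto split: if_split)
        qed
        ultimately show ?thesis using c by simp
      next
        case False
        then have "{v\<in>?A. ?adj w v} = {}"
          using Qv i's by auto
        moreover have "w \<notin> ?B" using False Qv t by auto
        ultimately show ?thesis by (simp only:) simp
      qed
    next
      case (Zv c s)
      with wV have cs: "odd s" unfolding atg_V_def by auto
      have "{v\<in>?A. ?adj w v} = {}" using Zv cs by auto
      moreover have "w \<notin> ?B" using Zv by auto
      ultimately show ?thesis by (simp only:) simp
    next
      case (Xv c s)
      with wV have cs: "c < mx" "even s" "1 \<le> s" "s \<le> 2*T" unfolding atg_V_def by auto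
      have "w \<notin> ?B" using Xv by auto
      moreover have "even (card {v\<in>?A. ?adj w v})"
      proof (cases "t < s \<and> s < t'")
        case True
        have "{v\<in>?A. ?adj w v} = (\<lambda>i. Qv i s) ` {i\<in>\<alpha>. HX c i}"
          using Xv cs aL True by auto
        moreover have "even (card {i\<in>\<alpha>. HX c i})" using cx cs by blast
        ultimately show ?thesis by (simp add: card_image[OF inj_Qv])
      next
        case False
        then have "{v\<in>?A. ?adj w v} = {}" using Xv by auto
        then show ?thesis by (simp only:) simp
      qed
      ultimately show ?thesis by simp
    qed
  qed
qed



lemma lay_mono:
  fixes lay :: "nat \<Rightarrow> nat" and m j j' :: nat
  assumes incr: "\<forall>j. 1 \<le> j \<and> j < m \<longrightarrow> lay j < lay (j+1)"
  shows "1 \<le> j \<Longrightarrow> j \<le> j' \<Longrightarrow> j' \<le> m \<Longrightarrow> lay j \<le> lay j'"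
proof (induction j')
  case 0 then show ?case by simp
next
  case (Suc k)
  show ?case
  proof (cases "j = Suc k")
    case True then show ?thesis by simp
  next
    case False
    then have "j \<le> k" "k \<le> m" using Suc by auto
    then have "lay j \<le> lay k" using Suc by auto
    moreover have "lay k < lay (k+1)" using incr Suc \<open>j \<le> k\<close> by auto
    ultimately show ?thesis by simp
  qed
qed

lemma lay_range:
  fixes lay :: "nat \<Rightarrow> nat" and m j T :: nat
  assumes first: "lay 1 = 1" and last: "lay m = 2*T+1"
    and incr: "\<forall>j. 1 \<le> j \<and> j < m \<longrightarrow> lay j < lay (j+1)"
    and j: "1 \<le> j" "j \<le> m"
  shows "1 \<le> lay j \<and> lay j \<le> 2*T+1"
  using lay_mono[OF incr, of 1 j] lay_mono[OF incr, of j m] first last j by auto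

lemma ops_props:
  fixes HX HZ :: "nat \<Rightarrow> nat \<Rightarrow> bool" and n mx mz T m :: nat and lay :: "nat \<Rightarrow> nat"
  assumes code: "css_code HX HZ mx mz n"
    and first: "lay 1 = 1" and last: "lay m = 2*T+1"
    and incr: "\<forall>j. 1 \<le> j \<and> j < m \<longrightarrow> lay j < lay (j+1)"
    and odd_lay: "\<forall>j. 1 \<le> j \<and> j \<le> m \<longrightarrow> odd (lay j)"
    and ab: "(a, b) \<in> ghz_ops HX HZ n mx mz m lay"
  shows "a \<subseteq> unmeasured n m lay \<and> b \<subseteq> unmeasured n m lay \<and> (a = {} \<or> b = {}) \<and>
     (\<exists>\<alpha> \<subseteq> atg_V n mx mz T - unmeasured n m lay. pauli (a \<union> \<alpha>) b (atg_state HX HZ n mx mz T) = atg_state HX HZ n mx mz T)"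
proof -
  let ?U = "unmeasured n m lay"
  let ?V = "atg_V n mx mz T"
  let ?\<psi> = "atg_state HX HZ n mx mz T"
  have rng: "1 \<le> lay j \<and> lay j \<le> 2*T+1" if "1 \<le> j" "j \<le> m" for j
    using lay_range[OF first last incr that] .
  have orth: "css_orthogonal HX HZ mx mz n" using code unfolding css_code_def by blast
  let ?S1 = "{({Qv i (lay j) | i. i < n \<and> HX c i}, {}) | c j. c < mx \<and> 1 \<le> j \<and> j \<le> m}"
  let ?S2 = "{({}, {Qv i (lay j) | i. i < n \<and> HZ c i}) | c j. c < mz \<and> 1 \<le> j \<and> j \<le> m}"
  let ?S3 = "{({Qv i (lay j) | i j. i \<in> \<alpha> \<and> 1 \<le> j \<and> j \<le> m}, {}) | \<alpha>.
         logical_X_support HX HZ mx mz n \<alpha>}"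
  let ?S4 = "{({}, {Qv i (lay j) | i. i \<in> \<alpha>} \<union> {Qv i (lay (j+1)) | i. i \<in> \<alpha>}) | \<alpha> j.
         logical_Z_support HX HZ mx mz n \<alpha> \<and> 1 \<le> j \<and> j < m}"
  have "(a,b) \<in> ?S1 \<or> (a,b) \<in> ?S2 \<or> (a,b) \<in> ?S3 \<or> (a,b) \<in> ?S4"
    using ab unfolding ghz_ops_def by (simp only: Un_iff disj_assoc)
  then show ?thesis
  proof (elim disjE)
    assume "(a,b) \<in> ?S1"
    then obtain c j where X: "a = {Qv i (lay j) | i. i < n \<and> HX c i}" "b = {}" "c < mx" "1 \<le> j" "j \<le> m"
      by auto
    let ?\<alpha> = "{Xv c s | s. (s+1 = lay j \<or> s = lay j+1) \<and> 1 \<le> s \<and> s \<le> 2*T}"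
    have t: "odd (lay j)" "1 \<le> lay j" "lay j \<le> 2*T+1" using rng[OF X(4,5)] odd_lay X(4,5) by auto
    have par: "even s" if "s+1 = lay j \<or> s = lay j+1" for s
    proof -
      from that consider "lay j = s+1" | "s = lay j + 1" by auto
      then show ?thesis using t(1) by cases auto
    qed
    have "?\<alpha> \<subseteq> ?V - ?U" unfolding atg_V_def unmeasured_def using X t par by auto
    moreover have "pauli (a \<union> ?\<alpha>) b ?\<psi> = ?\<psi>" unfolding X(1,2) by (rule stab_X[OF X(3) t orth])
    moreover have "a \<subseteq> ?U" unfolding X(1) unmeasured_def using X by auto
    ultimately show ?thesis using X by blast
  next
    assume "(a,b) \<in> ?S2"
    then obtain c j where Z: "a = {}" "b = {Qv i (lay j) | i. i < n \<and> HZ c i}" "c < mz" "1 \<le> j" "j \<le> m"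
      by auto
    have t: "odd (lay j)" "1 \<le> lay j" "lay j \<le> 2*T+1" using rng[OF Z(4,5)] odd_lay Z(4,5) by auto
    have "{Zv c (lay j)} \<subseteq> ?V - ?U" unfolding atg_V_def unmeasured_def using Z t by auto
    moreover have "pauli (a \<union> {Zv c (lay j)}) b ?\<psi> = ?\<psi>" unfolding Z(1,2)
      using stab_Z[OF Z(3) t] by simp
    moreover have "b \<subseteq> ?U" unfolding Z(2) unmeasured_def using Z by auto
    ultimately show ?thesis using Z by blast
  next
    assume "(a,b) \<in> ?S3"
    then obtain \<alpha>L where LX: "a = {Qv i (lay j) | i j. i \<in> \<alpha>L \<and> 1 \<le> j \<and> j \<le> m}" "b = {}"
        "logical_X_support HX HZ mx mz n \<alpha>L"
      by auto
    have aL: "\<alpha>L \<subseteq> {..<n}" and cz: "\<forall>c<mz. even (card {i\<in>\<alpha>L. HZ c i})"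
      using LX(3) unfolding logical_X_support_def by auto
    let ?\<alpha> = "{Qv i s | i s. i \<in> \<alpha>L \<and> odd s \<and> 1 \<le> s \<and> s \<le> 2*T+1 \<and> (\<forall>j. 1 \<le> j \<and> j \<le> m \<longrightarrow> s \<noteq> lay j)}"
    have "?\<alpha> \<subseteq> ?V - ?U" unfolding atg_V_def unmeasured_def using aL by auto
    moreover have "a \<union> ?\<alpha> = {Qv i s | i s. i \<in> \<alpha>L \<and> odd s \<and> 1 \<le> s \<and> s \<le> 2*T+1}"
    proof
      show "a \<union> ?\<alpha> \<subseteq> {Qv i s | i s. i \<in> \<alpha>L \<and> odd s \<and> 1 \<le> s \<and> s \<le> 2*T+1}"
        unfolding LX(1) using rng odd_lay by auto
      show "{Qv i s | i s. i \<in> \<alpha>L \<and> odd s \<and> 1 \<le> s \<and> s \<le> 2*T+1} \<subseteq> a \<union> ?\<alpha>"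
        unfolding LX(1) by auto
    qed
    then have "pauli (a \<union> ?\<alpha>) b ?\<psi> = ?\<psi>" unfolding LX(2) using stab_LX[OF aL cz] by simp
    moreover have "a \<subseteq> ?U" unfolding LX(1) unmeasured_def using aL by auto
    ultimately show ?thesis using LX by blast
  next
    assume "(a,b) \<in> ?S4"
    then obtain \<alpha>L j where LZ: "a = {}" "b = {Qv i (lay j) | i. i \<in> \<alpha>L} \<union> {Qv i (lay (j+1)) | i. i \<in> \<alpha>L}"
        "logical_Z_support HX HZ mx mz n \<alpha>L" "1 \<le> j" "j < m"
      by auto
    have aL: "\<alpha>L \<subseteq> {..<n}" and cx: "\<forall>c<mx. even (card {i\<in>\<alpha>L. HX c i})"
      using LZ(3) unfolding logical_Z_support_def by auto
    have t: "odd (lay j)" "odd (lay (j+1))" "1 \<le> lay j" "lay j < lay (j+1)" "lay (j+1) \<le> 2*T+1"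
      using rng[of j] rng[of "j+1"] odd_lay incr LZ(4,5) by auto
    let ?\<alpha> = "{Qv i s | i s. i \<in> \<alpha>L \<and> even s \<and> lay j < s \<and> s < lay (j+1)}"
    have "?\<alpha> \<subseteq> ?V - ?U"
    proof
      fix v assume "v \<in> ?\<alpha>"
      then obtain i s where v: "v = Qv i s" "i \<in> \<alpha>L" "even s" "lay j < s" "s < lay (j+1)" by blast
      have "v \<in> ?V" unfolding atg_V_def using v t aL by auto
      moreover have "v \<notin> ?U"
      proof
        assume "v \<in> ?U"
        then obtain l j' where "v = Qv l (lay j')" "1 \<le> j'" "j' \<le> m" unfolding unmeasured_def by blast
        then have "s = lay j'" "odd (lay j')" using v odd_lay by auto
        then show False using v by simp
      qed
      ultimately show "v \<in> ?V - ?U" by blast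
    qed
    moreover have "pauli (a \<union> ?\<alpha>) b ?\<psi> = ?\<psi>" unfolding LZ(1,2)
      using stab_LZ[OF aL cx t] by simp
    moreover have "b \<subseteq> ?U"
    proof -
      have aL': "\<forall>i\<in>\<alpha>L. i < n" using aL by auto
      show ?thesis unfolding LZ(2) unmeasured_def
        apply auto
         apply (rule exI[of _ j], use aL' LZ(4,5) in simp)
        apply (rule exI[of _ "Suc j"], use aL' LZ(4,5) in simp)
        done
    qed
    ultimately show ?thesis using LZ by blast
  qed
qed



theorem claimC1:
  fixes HX HZ :: "nat \<Rightarrow> nat \<Rightarrow> bool" and n mx mz T m :: nat and lay :: "nat \<Rightarrow> nat"
  assumes code: "css_code HX HZ mx mz n"
    and T: "T \<ge> 1"
    and m: "m \<ge> 1"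
    and first: "lay 1 = 1" and last: "lay m = 2*T+1"
    and incr: "\<forall>j. 1 \<le> j \<and> j < m \<longrightarrow> lay j < lay (j+1)"
    and odd_lay: "\<forall>j. 1 \<le> j \<and> j \<le> m \<longrightarrow> odd (lay j)"
  defines "V \<equiv> atg_V n mx mz T"
    and "U \<equiv> unmeasured n m lay"
    and "M \<equiv> atg_V n mx mz T - unmeasured n m lay"
    and "\<psi> \<equiv> atg_state HX HZ n mx mz T"
  shows
    "(\<forall>(a, b) \<in> ghz_ops HX HZ n mx mz m lay.
        \<exists>\<alpha> \<subseteq> M.
          pauli (a \<union> \<alpha>) b \<psi> = \<psi>
        \<and> (\<forall>s \<subseteq> M. pauli a b (post_meas V M \<psi> s)
                     = (\<lambda>Y. (-1) ^ card (s \<inter> \<alpha>) * post_meas V M \<psi> s Y)))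
   \<and> (\<forall>s \<subseteq> M. \<exists>a b. a \<subseteq> U \<and> b \<subseteq> U \<and>
        is_encoded_ghz HX HZ n mx mz m lay (pauli a b (post_meas V M \<psi> s)))"
proof -
  have finV: "finite V" unfolding V_def by (rule atg_V_finite)
  have UV: "U \<subseteq> V"
  proof
    fix v assume "v \<in> U"
    then obtain l j where v: "v = Qv l (lay j)" "l < n" "1 \<le> j" "j \<le> m"
      unfolding U_def unmeasured_def by blast
    have "1 \<le> lay j \<and> lay j \<le> 2*T+1" using lay_range[OF first last incr v(3,4)] .
    then show "v \<in> V" unfolding V_def atg_V_def using v by auto
  qed
  have MV: "M \<subseteq> V" unfolding M_def V_def by blast
  have VM: "V - M = U" using UV unfolding M_def V_def U_def by blast
  have finU: "finite U" using finite_subset[OF UV finV] .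
  have P: "a \<subseteq> U \<and> b \<subseteq> U \<and> (a = {} \<or> b = {}) \<and> (\<exists>\<alpha> \<subseteq> M. pauli (a \<union> \<alpha>) b \<psi> = \<psi>)"
    if "(a, b) \<in> ghz_ops HX HZ n mx mz m lay" for a b
    using ops_props[OF code first last incr odd_lay that] unfolding U_def M_def \<psi>_def by blast
  have P1: "\<exists>\<alpha> \<subseteq> M. pauli (a \<union> \<alpha>) b \<psi> = \<psi>
        \<and> (\<forall>s \<subseteq> M. pauli a b (post_meas V M \<psi> s) = (\<lambda>Y. (-1) ^ card (s \<inter> \<alpha>) * post_meas V M \<psi> s Y))"
    if ab: "(a, b) \<in> ghz_ops HX HZ n mx mz m lay" for a b
  proof -
    from P[OF ab] obtain \<alpha> where al: "\<alpha> \<subseteq> M" "pauli (a \<union> \<alpha>) b \<psi> = \<psi>" and aU: "a \<subseteq> U" and bU: "b \<subseteq> U"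
      by blast
    have "\<forall>s \<subseteq> M. pauli a b (post_meas V M \<psi> s) = (\<lambda>Y. (-1) ^ card (s \<inter> \<alpha>) * post_meas V M \<psi> s Y)"
    proof (intro allI impI)
      fix s assume "s \<subseteq> M"
      show "pauli a b (post_meas V M \<psi> s) = (\<lambda>Y. (-1) ^ card (s \<inter> \<alpha>) * post_meas V M \<psi> s Y)"
        by (rule post_meas_eig[OF finV MV _ _ al(1) \<open>s \<subseteq> M\<close> al(2)]) (use aU bU VM in auto)
    qed
    then show ?thesis using al by blast
  qed
  have part1: "\<forall>(a, b) \<in> ghz_ops HX HZ n mx mz m lay.
        \<exists>\<alpha> \<subseteq> M. pauli (a \<union> \<alpha>) b \<psi> = \<psi>
        \<and> (\<forall>s \<subseteq> M. pauli a b (post_meas V M \<psi> s) = (\<lambda>Y. (-1) ^ card (s \<inter> \<alpha>) * post_meas V M \<psi> s Y))"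
    using P1 by blast
  have part2: "\<exists>a b. a \<subseteq> U \<and> b \<subseteq> U \<and> is_encoded_ghz HX HZ n mx mz m lay (pauli a b (post_meas V M \<psi> s))"
    if sM: "s \<subseteq> M" for s
  proof -
    let ?\<phi> = "post_meas V M \<psi> s"
    have supp: "\<forall>Y. \<not> Y \<subseteq> U \<longrightarrow> ?\<phi> Y = 0" using VM unfolding post_meas_def by auto
    have ops: "\<forall>(a',b')\<in>ghz_ops HX HZ n mx mz m lay. a' \<subseteq> U \<and> b' \<subseteq> U \<and> (a' = {} \<or> b' = {}) \<and> (\<exists>c. pauli a' b' ?\<phi> = (\<lambda>Y. c * ?\<phi> Y))"
    proof (intro ballI, clarify)
      fix a' b' assume ab: "(a', b') \<in> ghz_ops HX HZ n mx mz m lay"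
      from P1[OF ab] obtain \<alpha> where "\<forall>s \<subseteq> M. pauli a' b' (post_meas V M \<psi> s) = (\<lambda>Y. (-1) ^ card (s \<inter> \<alpha>) * post_meas V M \<psi> s Y)"
        by blast
      then have "\<exists>c. pauli a' b' ?\<phi> = (\<lambda>Y. c * ?\<phi> Y)" using sM by blast
      then show "a' \<subseteq> U \<and> b' \<subseteq> U \<and> (a' = {} \<or> b' = {}) \<and> (\<exists>c. pauli a' b' ?\<phi> = (\<lambda>Y. c * ?\<phi> Y))"
        using P[OF ab] by blast
    qed
    obtain a b where "a \<subseteq> U" "b \<subseteq> U" "\<forall>(a',b')\<in>ghz_ops HX HZ n mx mz m lay. pauli a' b' (pauli a b ?\<phi>) = pauli a b ?\<phi>"
      using correction[OF finU supp ops] by blast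
    then show ?thesis unfolding is_encoded_ghz_def by blast
  qed
  show ?thesis using part1 part2 by blast
qed

end
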